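(* Let $n\ge1$, $0<\lambda<1$, $p>1$, $\nu>1$, and let $w$ be a non-negative locally integrable function on $\mathbb{R}^n$. Let $\Lambda=\{x_j\}$ be a sequence of points in $\mathbb{R}^n$ such that $$\max\big(|x_i|,|x_j|\big)\le \nu|x_i-x_j|\quad\text{for all } i\neq j,$$ let $\mathcal{F}$ be the family of all cubes (with sides parallel to the axes) centered at points of $\Lambda$, and let $\Omega:=\{x_j: x_j\in\Lambda\}$. Then there exist $0<r_1<r_2<\infty$ (depending on $\nu$) such that, for the family $$\mathcal{W}_{r_1,r_2}:=\{Q\in\mathcal{Q}: r_1\,\mathrm{diam}\,Q\le \mathrm{dist}(Q,\Omega)\le r_2\,\mathrm{diam}\,Q\},$$ one has $\|f\|_{\mathcal{M}^p_{\lambda,\mathcal{F}}(w)}\simeq \|f\|_{\mathcal{M}^p_{\lambda,\mathcal{W}_{r_1,r_2}}(w)}$, i.e. there is $C\ge1$ independent of $f$ with $C^{-1}\|f\|_{\mathcal{M}^p_{\lambda,\mathcal{W}_{r_1,r_2}}(w)}\le\|f\|_{\mathcal{M}^p_{\lambda,\mathcal{F}}(w)}\le C\|f\|_{\mathcal{M}^p_{\lambda,\mathcal{W}_{r_1,r_2}}(w)}$ for all measurable $f$.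
   Context: $\mathcal{Q}$ denotes the family of all cubes in $\mathbb{R}^n$ with sides parallel to the axes. For a family $\mathcal{G}\subset\mathcal{Q}$, $$\|f\|_{\mathcal{M}^p_{\lambda,\mathcal{G}}(w)}:=\sup_{Q\in\mathcal{G}}\Big(\frac{1}{|Q|^{\lambda}}\int_Q|f|^pw\Big)^{1/p}.$$ *)

theory Defs
  imports "HOL-Analysis.Analysis"
begin

definition cube :: "'a::euclidean_space \<Rightarrow> real \<Rightarrow> 'a set" where
  "cube c r = cbox (c - r *\<^sub>R One) (c + r *\<^sub>R One)"

definition all_cubes :: "'a::euclidean_space set set" where
  "all_cubes = {cube c r | c r. r > 0}"

definition locally_integrable :: "('a::euclidean_space \<Rightarrow> real) \<Rightarrow> bool" where
  "locally_integrable w \<longleftrightarrow> (\<forall>K. compact K \<longrightarrow> set_integrable lebesgue K w)"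

definition ennroot :: "real \<Rightarrow> ennreal \<Rightarrow> ennreal" where
  "ennroot p x = (if x = \<infinity> then \<infinity> else ennreal (enn2real x powr (1 / p)))"

definition morrey_norm ::
  "real \<Rightarrow> real \<Rightarrow> 'a::euclidean_space set set \<Rightarrow> ('a \<Rightarrow> real) \<Rightarrow> ('a \<Rightarrow> real) \<Rightarrow> ennreal" where
  "morrey_norm p lam G w f =
     (SUP Q\<in>G. ennroot p (ennreal (1 / measure lebesgue Q powr lam) *
                           (\<integral>\<^sup>+ x\<in>Q. ennreal (\<bar>f x\<bar> powr p * w x) \<partial>lebesgue)))"

end

theory Submission
  imports Defs
begin


lemma one_inner: "b \<in> Basis \<Longrightarrow> (One::'a::euclidean_space) \<bullet> b = 1"
  by (simp add: inner_sum_left inner_Basis if_distrib cong: if_cong)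

lemma mem_cube: "y \<in> cube c r \<longleftrightarrow> (\<forall>b\<in>Basis. \<bar>(y - c) \<bullet> b\<bar> \<le> r)"
  unfolding cube_def mem_box
  by (auto simp: inner_diff_left inner_add_left one_inner abs_le_iff algebra_simps)

lemma cube_sets[measurable]: "cube c r \<in> sets lebesgue"
  unfolding cube_def by simp

lemma cube_norm:
  fixes y :: "'a::euclidean_space"
  assumes "y \<in> cube c r" shows "norm (y - c) \<le> real DIM('a) * r"
proof -
  have "norm (y - c) \<le> (\<Sum>b\<in>Basis. \<bar>(y - c) \<bullet> b\<bar>)" by (rule norm_le_l1)
  also have "\<dots> \<le> of_nat (card (Basis::'a set)) * r"
    using assms by (intro sum_bounded_above) (auto simp: mem_cube)
  finally show ?thesis by simp
qed

lemma cube_cube_norm: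
  fixes y :: "'a::euclidean_space"
  assumes "y \<in> cube c r" "u \<in> cube c r" shows "norm (y - u) \<le> real DIM('a) * (2 * r)"
proof -
  have "norm (y - u) \<le> (\<Sum>b\<in>Basis. \<bar>(y - u) \<bullet> b\<bar>)" by (rule norm_le_l1)
  also have "\<dots> \<le> of_nat (card (Basis::'a set)) * (2*r)"
  proof (intro sum_bounded_above)
    fix b :: 'a assume b: "b \<in> Basis"
    have "(y - u) \<bullet> b = (y - c) \<bullet> b - (u - c) \<bullet> b" by (simp add: inner_diff_left)
    then show "\<bar>(y - u) \<bullet> b\<bar> \<le> 2 * r" using assms b unfolding mem_cube
      by (smt (verit))
  qed
  finally show ?thesis by simp
qed

lemma not_cube_norm:
  assumes "y \<notin> cube c r" shows "r < norm (y - c)"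
proof -
  obtain b where b: "b \<in> Basis" "\<bar>(y - c) \<bullet> b\<bar> > r" using assms unfolding mem_cube by force
  then show ?thesis using Basis_le_norm[OF b(1), of "y - c"] by linarith
qed

lemma norm_cube: "norm (y - c) \<le> r \<Longrightarrow> y \<in> cube c r"
  unfolding mem_cube using Basis_le_norm order_trans by blast

lemma center_cube: "0 \<le> r \<Longrightarrow> c \<in> cube c r"
  by (simp add: mem_cube)

lemma cube_mono: "r \<le> s \<Longrightarrow> cube c r \<subseteq> cube c s"
  using order_trans by (force simp: subset_iff mem_cube)

lemma cube_zero: "cube c 0 = {c}"
proof -
  have "y \<in> cube c 0 \<longleftrightarrow> y = c" for y
    using norm_cube[of y c 0] cube_norm[of y c 0] by auto
  then show ?thesis by auto
qed

lemma measure_cube: "0 \<le> r \<Longrightarrow> measure lebesgue (cube (c::'a::euclidean_space) r) = (2*r)^DIM('a)"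
  unfolding cube_def by (simp add: content_cbox inner_diff_left inner_add_left one_inner)

lemma measure_cube_powr:
  assumes "0 < r"
  shows "measure lebesgue (cube (c::'a::euclidean_space) r) powr lam = (2*r) powr (real DIM('a) * lam)"
proof -
  have "(2*r)^DIM('a) = (2*r) powr real DIM('a)" using assms by (simp add: powr_realpow)
  then show ?thesis using assms by (simp add: measure_cube powr_powr)
qed

lemma measure_cube_pos: "0 < r \<Longrightarrow> 0 < measure lebesgue (cube (c::'a::euclidean_space) r)"
  by (simp add: measure_cube)

lemma norm_One_ge: "1 \<le> norm (One::'a::euclidean_space)"
proof -
  obtain b :: 'a where "b \<in> Basis" using nonempty_Basis by blast
  then show ?thesis using Basis_le_norm[of b One] by (simp add: one_inner)
qed

lemma diam_cube:
  fixes c :: "'a::euclidean_space"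
  assumes "0 < r"
  shows "2 * r \<le> diameter (cube c r)" "diameter (cube c r) \<le> real DIM('a) * (2 * r)"
proof -
  have b: "bounded (cube c r)" unfolding cube_def by simp
  have m: "c - r *\<^sub>R One \<in> cube c r" "c + r *\<^sub>R One \<in> cube c r"
    using assms by (auto simp: mem_cube inner_diff_left one_inner)
  have "dist (c + r *\<^sub>R One) (c - r *\<^sub>R One) = 2 * r * norm (One::'a)"
    using assms by (simp add: dist_norm algebra_simps flip: scaleR_2)
  also have "\<dots> \<ge> 2 * r" using norm_One_ge[where 'a='a] assms by simp
  finally show "2 * r \<le> diameter (cube c r)"
    using diameter_bounded_bound[OF b m(2) m(1)] by linarith
  show "diameter (cube c r) \<le> real DIM('a) * (2 * r)"
    by (rule diameter_le) (use assms cube_cube_norm in auto)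
qed

lemma cover_exists:
  assumes "0 < (m::real)"
  obtains C :: "'a::euclidean_space set" where "finite C" "C \<subseteq> cube 0 1"
    "\<And>z t y. 0 < t \<Longrightarrow> y \<in> cube z t \<Longrightarrow> \<exists>c\<in>C. y \<in> cube (z + t *\<^sub>R c) (t / m)"
proof -
  have cpt: "compact (cube (0::'a) 1)" unfolding cube_def by simp
  have cov: "cube (0::'a) 1 \<subseteq> (\<Union>c\<in>cube 0 1. ball c (1/m))"
    using assms by auto
  obtain C where C: "C \<subseteq> cube 0 1" "finite C" "cube (0::'a) 1 \<subseteq> (\<Union>c\<in>C. ball c (1/m))"
    by (rule compactE_image[OF cpt _ cov]) auto
  have "\<exists>c\<in>C. y \<in> cube (z + t *\<^sub>R c) (t / m)" if t: "0 < t" and y: "y \<in> cube z t" for z t y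
  proof -
    define u where "u = (1/t) *\<^sub>R (y - z)"
    have "u \<in> cube 0 1"
      using y t by (auto simp: mem_cube u_def divide_le_eq)
    then obtain c where c: "c \<in> C" "dist c u < 1/m" using C(3) by auto
    have "y - (z + t *\<^sub>R c) = t *\<^sub>R (u - c)" using t by (simp add: u_def algebra_simps)
    then have "norm (y - (z + t *\<^sub>R c)) = t * norm (u - c)" using t by simp
    also have "\<dots> \<le> t * (1 / m)" proof (rule mult_left_mono)
      show "norm (u - c) \<le> 1 / m" using c(2) by (simp add: dist_norm norm_minus_commute)
    qed (use t in simp)
    also have "\<dots> = t / m" by simp
    finally have "y \<in> cube (z + t *\<^sub>R c) (t / m)" by (rule norm_cube)
    with c(1) show ?thesis by blast
  qed
  then show ?thesis using that[OF C(2) C(1)] by metis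
qed



lemma pow_div: fixes a b :: real shows "0 \<le> a \<Longrightarrow> (a / 2^k) powr b = a powr b * (1 / 2 powr b)^k"
proof -
  assume a: "0 \<le> a"
  have "((2::real)^k) powr b = (2 powr b)^k"
    by (simp add: powr_realpow[symmetric] powr_powr powr_power mult.commute)
  have "(a / 2^k) powr b = a powr b / (2^k) powr b" by (rule powr_divide)
  also have "\<dots> = a powr b / (2 powr b)^k" by (simp add: \<open>((2::real)^k) powr b = (2 powr b)^k\<close>)
  also have "\<dots> = a powr b * (1 / 2 powr b)^k" by (simp add: power_one_over divide_inverse power_inverse)
  finally show ?thesis .
qed

lemma geo_sum:
  assumes "0 \<le> X" "0 < b"
  shows "(\<Sum>k. ennreal (X * (1 / 2 powr b)^k)) = ennreal (X / (1 - 1 / 2 powr b))"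
proof -
  have q: "norm (1 / 2 powr b) < (1::real)" using assms by simp
  have "(\<lambda>k. X * (1 / 2 powr b)^k) sums (X * (1 / (1 - 1 / 2 powr b)))"
    by (intro sums_mult geometric_sums) (use q in simp)
  then have "summable (\<lambda>k. X * (1 / 2 powr b)^k)" "(\<Sum>k. X * (1 / 2 powr b)^k) = X / (1 - 1 / 2 powr b)"
    by (auto simp: sums_iff)
  then show ?thesis using assms by (subst suminf_ennreal2) auto
qed

lemma decomp:
  assumes "0 \<le> \<tau>" "y \<in> cube z T" "y \<notin> cube z \<tau>"
  shows "\<exists>k::nat. \<tau> < T / 2^k \<and> y \<in> cube z (T / 2^k) \<and> y \<notin> cube z (T / 2^k / 2)"
proof -
  obtain b where b: "b \<in> Basis" "\<tau> < \<bar>(y - z) \<bullet> b\<bar>" using assms(3) unfolding mem_cube by force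
  define e where "e = \<bar>(y - z) \<bullet> b\<bar>"
  have e: "0 < e" using b assms(1) by (simp add: e_def)
  obtain n :: nat where n: "T / e < 2 ^ n" using real_arch_pow[of 2 "T / e"] by auto
  have "T / 2^n < e" using n e by (simp add: field_simps)
  moreover have "\<And>x::real. x < e \<Longrightarrow> x / 2 < e" using e by linarith
  ultimately have "T / 2^n / 2 < e" by blast
  then have Pn: "y \<notin> cube z (T / 2^n / 2)" using b(1) unfolding mem_cube e_def by (meson not_le)
  define k where "k = (LEAST k. y \<notin> cube z (T / 2^k / 2))"
  have Pk: "y \<notin> cube z (T / 2^k / 2)" unfolding k_def by (rule LeastI[of _ n]) (rule Pn)
  have Ik: "y \<in> cube z (T / 2^k)"
  proof (cases k)
    case 0 then show ?thesis using assms(2) by simp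
  next
    case (Suc j)
    then have "j < k" by simp
    then have "\<not> y \<notin> cube z (T / 2^j / 2)" unfolding k_def by (rule not_less_Least)
    then show ?thesis using Suc by (simp add: mult.commute)
  qed
  have "\<tau> < T / 2^k"
  proof (rule ccontr)
    assume "\<not> \<tau> < T / 2^k"
    then have "cube z (T / 2^k) \<subseteq> cube z \<tau>" by (intro cube_mono) simp
    then show False using Ik assms(3) by blast
  qed
  then show ?thesis using Ik Pk by blast
qed

locale geo =
  fixes \<Lambda> :: "'a::euclidean_space set" and \<nu> lam A :: real and M :: "'a measure" and C :: "'a set"
    and d mm cc r1 r2 \<beta> KI KD KR :: real
  assumes nu: "1 < \<nu>"
    and sep: "\<And>x y. x \<in> \<Lambda> \<Longrightarrow> y \<in> \<Lambda> \<Longrightarrow> x \<noteq> y \<Longrightarrow> max (norm x) (norm y) \<le> \<nu> * norm (x - y)"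
    and setsM: "sets M = sets lebesgue" and single: "\<And>x. emeasure M {x} = 0"
    and lam: "0 < lam" and A: "0 \<le> A"
    and d_def: "d = real DIM('a)" and mm_def: "mm = 16*d*\<nu>*(2+d)" and cc_def: "cc = 1/(4*d*\<nu>)"
    and r1_def: "r1 = 1/2" and r2_def: "r2 = 5*d*mm"
    and beta_def: "\<beta> = d * lam"
    and Cfin: "finite C" and Csub: "C \<subseteq> cube 0 1"
    and Ccov: "\<And>z t y. 0 < t \<Longrightarrow> y \<in> cube z t \<Longrightarrow> \<exists>c\<in>C. y \<in> cube (z + t *\<^sub>R c) (t / mm)"
    and KI_def: "KI = card C * (2/mm) powr \<beta> / (1 - 1 / 2 powr \<beta>)"
    and KD_def: "KD = (2/mm) powr \<beta> + KI * ((2+d)/mm) powr \<beta>"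
    and KR_def: "KR = KI + (2*\<nu>) powr \<beta> + card C * KD * (1 + 1/cc) powr \<beta> / (1 - 1 / 2 powr \<beta>)"
    and hyp: "\<And>Q. Q \<in> all_cubes \<Longrightarrow> r1 * diameter Q \<le> setdist Q \<Lambda> \<Longrightarrow> setdist Q \<Lambda> \<le> r2 * diameter Q
               \<Longrightarrow> emeasure M Q \<le> ennreal (A * measure lebesgue Q powr lam)"
begin

lemma d_ge: "1 \<le> d" using d_def by simp
lemma beta_pos: "0 < \<beta>" using lam d_ge beta_def by simp
lemma q_lt: "1 / 2 powr \<beta> < 1" using beta_pos by simp
lemma mm_ge: "32 * d \<le> mm"
proof -
  have "32 * d = 16 * d * 1 * 2" by simp
  also have "\<dots> \<le> 16 * d * \<nu> * (2 + d)" using nu d_ge by (intro mult_mono) auto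
  finally show ?thesis by (simp add: mm_def)
qed
lemma mm_pos: "0 < mm" using mm_ge d_ge by linarith
lemma dtm: "0 \<le> t \<Longrightarrow> d * (t / mm) \<le> t / 32"
proof -
  assume t: "0 \<le> t"
  have "d * (t / mm) = t * (d / mm)" by simp
  also have "d / mm \<le> 1/32" using mm_ge mm_pos by (simp add: field_simps)
  then have "t * (d / mm) \<le> t * (1/32)" using t by (intro mult_left_mono) auto
  finally show ?thesis by simp
qed
lemma cc_pos: "0 < cc" using cc_def d_ge nu by simp
lemma KI_nn: "0 \<le> KI" using KI_def q_lt by simp
lemma KD_nn: "0 \<le> KD" using KD_def KI_nn by simp
lemma KR_nn: "0 \<le> KR" using KR_def KI_nn KD_nn q_lt by simp

lemma inW:
  assumes s: "0 < s" and lo: "r1 * (2 * d * s) \<le> setdist (cube e s) \<Lambda>"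
    and up: "setdist (cube e s) \<Lambda> \<le> r2 * (2 * s)"
  shows "emeasure M (cube e s) \<le> ennreal (A * (2 * s) powr \<beta>)"
proof -
  have Q: "cube e s \<in> all_cubes" using s by (auto simp: all_cubes_def)
  have "r1 * diameter (cube e s) \<le> r1 * (d * (2 * s))"
    using diam_cube(2)[OF s, of e] r1_def d_def by simp
  then have 1: "r1 * diameter (cube e s) \<le> setdist (cube e s) \<Lambda>" using lo by simp
  have "r2 * (2 * s) \<le> r2 * diameter (cube e s)"
    using diam_cube(1)[OF s, of e] r2_def mm_pos d_ge by (intro mult_left_mono) auto
  then have 2: "setdist (cube e s) \<Lambda> \<le> r2 * diameter (cube e s)" using up by simp
  show ?thesis using hyp[OF Q 1 2] measure_cube_powr[OF s, of e lam] by (simp add: beta_def d_def)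
qed

lemma shell_gen:
  fixes X :: real
  assumes t: "0 < t" and X: "0 \<le> X"
    and H: "\<And>c y. c \<in> C \<Longrightarrow> y \<in> cube (z + t *\<^sub>R c) (t / mm) \<Longrightarrow> y \<in> cube z t \<Longrightarrow> y \<notin> cube z (t/2)
              \<Longrightarrow> emeasure M (cube (z + t *\<^sub>R c) (t / mm)) \<le> ennreal X"
  shows "emeasure M (cube z t - cube z (t/2)) \<le> ennreal (card C * X)"
proof -
  define D where "D c = cube (z + t *\<^sub>R c) (t / mm) \<inter> (cube z t - cube z (t/2))" for c
  have Dm: "D c \<in> sets M" for c unfolding D_def setsM by simp
  have "cube z t - cube z (t/2) \<subseteq> (\<Union>c\<in>C. D c)"
    using Ccov[OF t] unfolding D_def by blast
  then have "emeasure M (cube z t - cube z (t/2)) \<le> emeasure M (\<Union>c\<in>C. D c)"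
    by (rule emeasure_mono) (use Dm Cfin in auto)
  also have "\<dots> \<le> (\<Sum>c\<in>C. emeasure M (D c))"
    by (rule emeasure_subadditive_finite) (use Dm Cfin in auto)
  also have "\<dots> \<le> (\<Sum>c\<in>C. ennreal X)"
  proof (rule sum_mono)
    fix c assume c: "c \<in> C"
    show "emeasure M (D c) \<le> ennreal X"
    proof (cases "D c = {}")
      case True then show ?thesis by simp
    next
      case False
      then obtain y where y: "y \<in> D c" by blast
      have "emeasure M (D c) \<le> emeasure M (cube (z + t *\<^sub>R c) (t / mm))"
        by (rule emeasure_mono) (auto simp: D_def setsM)
      also have "\<dots> \<le> ennreal X" using H[OF c] y unfolding D_def by blast
      finally show ?thesis .
    qed
  qed
  also have "\<dots> = ennreal (card C * X)" using X by (simp add: ennreal_mult ennreal_of_nat_eq_real_of_nat)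
  finally show ?thesis .
qed

end


context geo begin

lemma cnorm: "c \<in> C \<Longrightarrow> norm c \<le> d"
  using Csub cube_norm[of c 0 1] d_def by auto

lemma iso:
  assumes x: "x \<in> \<Lambda>" and rho: "0 < \<rho>" "\<rho> \<le> cc * norm x"
  shows "emeasure M (cube x \<rho>) \<le> ennreal (A * KI * \<rho> powr \<beta>)"
proof -
  have nx: "4 * d * \<nu> * \<rho> \<le> norm x"
  proof -
    have "4 * d * \<nu> * \<rho> \<le> 4 * d * \<nu> * (cc * norm x)" using rho d_ge nu by (intro mult_left_mono) auto
    also have "\<dots> = norm x" using cc_def d_ge nu by simp
    finally show ?thesis .
  qed
  have shell: "emeasure M (cube x t - cube x (t/2)) \<le> ennreal (card C * (A * (2 * (t / mm)) powr \<beta>))"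
    if t: "0 < t" "t \<le> \<rho>" for t
  proof (rule shell_gen[OF t(1)])
    show "0 \<le> A * (2 * (t / mm)) powr \<beta>" using A by simp
    fix c y assume c: "c \<in> C" and y: "y \<in> cube (x + t *\<^sub>R c) (t / mm)" "y \<in> cube x t" "y \<notin> cube x (t/2)"
    define e where "e = x + t *\<^sub>R c"
    have s: "0 < t / mm" using t mm_pos by simp
    have ex: "norm (e - x) \<le> d * t" using cnorm[OF c] t by (simp add: e_def mult.commute)
    have X: "d * (t / mm) \<le> t / 32" using dtm t by simp
    show "emeasure M (cube (x + t *\<^sub>R c) (t / mm)) \<le> ennreal (A * (2 * (t / mm)) powr \<beta>)"
      unfolding e_def[symmetric]
    proof (rule inW[OF s])
      have "setdist (cube e (t / mm)) \<Lambda> \<le> dist e x"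
        by (rule setdist_le_dist[OF center_cube x]) (use s in simp)
      also have "\<dots> \<le> d * t" using ex by (simp add: dist_norm)
      also have "\<dots> \<le> r2 * (2 * (t / mm))" using mm_pos t d_ge by (simp add: r2_def field_simps)
      finally show "setdist (cube e (t / mm)) \<Lambda> \<le> r2 * (2 * (t / mm))" .
      show "r1 * (2 * d * (t / mm)) \<le> setdist (cube e (t / mm)) \<Lambda>"
      proof (rule le_setdistI)
        show "cube e (t / mm) \<noteq> {}" using center_cube[of "t/mm" e] s by auto
        show "\<Lambda> \<noteq> {}" using x by auto
        fix u v assume u: "u \<in> cube e (t / mm)" and v: "v \<in> \<Lambda>"
        have uy: "norm (u - y) \<le> d * (2 * (t / mm))" using cube_cube_norm[OF u y(1)[folded e_def]] d_def by simp
        have yx: "t / 2 < norm (y - x)" using not_cube_norm[OF y(3)] .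
        have ue: "norm (u - e) \<le> d * (t / mm)" using cube_norm[OF u] d_def by simp
        have ux: "norm (u - x) \<le> norm (u - e) + norm (e - x)" using norm_triangle_ineq[of "u - e" "e - x"] by simp
        have r1e: "r1 * (2 * d * (t / mm)) = d * (t / mm)" by (simp add: r1_def)
        show "r1 * (2 * d * (t / mm)) \<le> dist u v"
        proof (cases "v = x")
          case True
          have "norm (y - x) \<le> norm (u - y) + norm (u - x)" using norm_triangle_ineq4[of "y - u" "x - u"] 
            by (simp add: norm_minus_commute)
          moreover have "d * (2 * (t / mm)) = 2 * (d * (t / mm))" by simp
          ultimately show ?thesis using uy yx X t(1) unfolding True r1e dist_norm by linarith
        next
          case False
          have "max (norm x) (norm v) \<le> \<nu> * norm (x - v)" using sep[OF x v] False by auto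
          then have "\<nu> * (4 * d * t) \<le> \<nu> * norm (x - v)"
            using nx t(2) nu d_ge by (smt (verit, best) mult.commute mult.left_commute mult_left_mono)
          then have xv: "4 * d * t \<le> norm (x - v)" using nu by simp
          have "norm (x - v) \<le> norm (u - x) + norm (u - v)" using norm_triangle_ineq4[of "x - u" "v - u"]
            by (simp add: norm_minus_commute)
          moreover have "t \<le> d * t" using d_ge t by simp
          moreover have "4 * d * t = 4 * (d * t)" by simp
          ultimately show ?thesis using xv ux ue ex X t(1) unfolding r1e dist_norm by linarith
        qed
      qed
    qed
  qed
  define S where "S k = cube x (\<rho> / 2^k) - cube x (\<rho> / 2^k / 2)" for k :: nat
  have Sm: "S k \<in> sets M" for k unfolding S_def setsM by simp
  have sub: "cube x \<rho> \<subseteq> {x} \<union> (\<Union>k. S k)"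
  proof
    fix y assume y: "y \<in> cube x \<rho>"
    show "y \<in> {x} \<union> (\<Union>k. S k)"
    proof (cases "y = x")
      case False
      then have "y \<notin> cube x 0" by (simp add: cube_zero)
      then obtain k where "y \<in> cube x (\<rho> / 2^k)" "y \<notin> cube x (\<rho> / 2^k / 2)"
        using decomp[of 0 y x \<rho>] y by auto
      then show ?thesis by (auto simp: S_def)
    qed simp
  qed
  have xm: "{x} \<in> sets M" unfolding setsM by simp
  have Um: "(\<Union>k. S k) \<in> sets M" using Sm by blast
  have "emeasure M (cube x \<rho>) \<le> emeasure M ({x} \<union> (\<Union>k. S k))"
    by (rule emeasure_mono[OF sub]) (use xm Um in blast)
  also have "\<dots> \<le> emeasure M {x} + emeasure M (\<Union>k. S k)"
    by (rule emeasure_subadditive[OF xm Um])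
  also have "\<dots> \<le> (\<Sum>k. emeasure M (S k))"
    using single emeasure_subadditive_countably[of S M] Sm by auto
  also have "\<dots> \<le> (\<Sum>k. ennreal (card C * A * (2 * \<rho> / mm) powr \<beta> * (1 / 2 powr \<beta>)^k))"
  proof (rule suminf_le)
    fix k :: nat
    have t: "0 < \<rho> / 2^k" "\<rho> / 2^k \<le> \<rho>" using rho by (auto simp: divide_le_eq)
    have "2 * (\<rho> / 2^k / mm) = (2 * \<rho> / mm) / 2^k" by simp
    moreover have "((2 * \<rho> / mm) / 2^k) powr \<beta> = (2 * \<rho> / mm) powr \<beta> * (1 / 2 powr \<beta>)^k"
      using pow_div[of "2 * \<rho> / mm" k \<beta>] rho mm_pos by simp
    ultimately have "(2 * (\<rho> / 2^k / mm)) powr \<beta> = (2 * \<rho> / mm) powr \<beta> * (1 / 2 powr \<beta>)^k"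
      by metis
    then show "emeasure M (S k) \<le> ennreal (card C * A * (2 * \<rho> / mm) powr \<beta> * (1 / 2 powr \<beta>)^k)"
      using shell[OF t] unfolding S_def by (simp add: mult.assoc)
  qed auto
  also have "\<dots> = ennreal (card C * A * (2 * \<rho> / mm) powr \<beta> / (1 - 1 / 2 powr \<beta>))"
    by (rule geo_sum) (use A beta_pos in auto)
  also have "card C * A * (2 * \<rho> / mm) powr \<beta> / (1 - 1 / 2 powr \<beta>) = A * KI * \<rho> powr \<beta>"
  proof -
    have "(2 * \<rho> / mm) powr \<beta> = (2 / mm) powr \<beta> * \<rho> powr \<beta>"
      by (simp add: powr_mult[symmetric])
    then show ?thesis by (simp add: KI_def)
  qed
  finally show ?thesis .
qed

end


context geo begin

lemma origin:
  assumes x: "x \<in> \<Lambda>" and R: "0 < R" "cc * norm x < R"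
  shows "emeasure M (cube x R) \<le> ennreal (A * ((2*\<nu>) powr \<beta> + card C * KD * (1 + 1/cc) powr \<beta> / (1 - 1 / 2 powr \<beta>)) * R powr \<beta>)"
proof -
  define \<rho>0 where "\<rho>0 = infdist 0 \<Lambda>"
  define \<tau> where "\<tau> = \<rho>0 / (4*d)"
  define T where "T = R + R / cc"
  have Lne: "\<Lambda> \<noteq> {}" using x by auto
  have \<rho>0: "0 \<le> \<rho>0" by (simp add: \<rho>0_def infdist_nonneg)
  have \<tau>0: "0 \<le> \<tau>" using \<rho>0 d_ge by (simp add: \<tau>_def)
  have \<rho>0\<tau>: "\<rho>0 = 4 * d * \<tau>" using d_ge by (simp add: \<tau>_def)
  have ccinv: "1 / cc = 4 * d * \<nu>" by (simp add: cc_def)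
  have nxR: "norm x < R / cc" using R cc_pos by (simp add: field_simps)
  have \<rho>0le: "\<rho>0 \<le> norm y" if "y \<in> \<Lambda>" for y
    using infdist_le[OF that, of 0] by (simp add: \<rho>0_def)
  have near: "\<exists>x0\<in>\<Lambda>. norm x0 < 4 * d * t" if "\<tau> < t" for t
  proof -
    have "setdist {0} \<Lambda> < 4 * d * t" using that d_ge \<rho>0\<tau> by (simp add: \<rho>0_def infdist_eq_setdist)
    then obtain a b where "a \<in> {0}" "b \<in> \<Lambda>" "dist a b < 4 * d * t" by (rule setdist_ltE) (use Lne in auto)
    then show ?thesis by auto
  qed
  have \<tau>R: "\<tau> \<le> \<nu> * R"
  proof -
    have "\<rho>0 \<le> R / cc" using \<rho>0le[OF x] nxR by simp
    moreover have "R / cc = 4 * d * (\<nu> * R)" by (simp add: cc_def)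
    ultimately have "4 * d * \<tau> \<le> 4 * d * (\<nu> * R)" using \<rho>0\<tau> by simp
    then show ?thesis using d_ge by simp
  qed
  have cen: "emeasure M (cube 0 \<tau>) \<le> ennreal (A * (2 * \<nu> * R) powr \<beta>)"
  proof (cases "\<rho>0 = 0")
    case True
    then have "\<tau> = 0" by (simp add: \<tau>_def)
    then show ?thesis by (simp add: cube_zero single)
  next
    case False
    then have \<tau>p: "0 < \<tau>" using \<rho>0 d_ge by (simp add: \<tau>_def)
    have "emeasure M (cube 0 \<tau>) \<le> ennreal (A * (2 * \<tau>) powr \<beta>)"
    proof (rule inW[OF \<tau>p])
      show "r1 * (2 * d * \<tau>) \<le> setdist (cube 0 \<tau>) \<Lambda>"
      proof (rule le_setdistI)
        show "cube 0 \<tau> \<noteq> {}" using center_cube[of \<tau> 0] \<tau>p by auto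
        show "\<Lambda> \<noteq> {}" by (rule Lne)
        fix u v :: 'a assume u: "u \<in> cube 0 \<tau>" and v: "v \<in> \<Lambda>"
        have "norm u \<le> d * \<tau>" using cube_norm[OF u] d_def by simp
        moreover have "4 * d * \<tau> \<le> norm v" using \<rho>0le[OF v] \<rho>0\<tau> by simp
        moreover have "norm v \<le> norm u + dist u v" using norm_triangle_ineq2[of v u]
          by (simp add: dist_norm norm_minus_commute)
        moreover have "4 * d * \<tau> = 4 * (d * \<tau>)" "2 * d * \<tau> = 2 * (d * \<tau>)" by simp_all
        moreover have "0 \<le> d * \<tau>" using \<tau>0 d_ge by simp
        ultimately show "r1 * (2 * d * \<tau>) \<le> dist u v" unfolding r1_def by linarith
      qed
      obtain x0 where x0: "x0 \<in> \<Lambda>" "norm x0 < 4 * d * (2 * \<tau>)" using near[of "2 * \<tau>"] \<tau>p by auto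
      have "setdist (cube 0 \<tau>) \<Lambda> \<le> dist 0 x0" by (rule setdist_le_dist[OF center_cube x0(1)]) (use \<tau>p in simp)
      also have "\<dots> \<le> 8 * d * \<tau>" using x0 by simp
      also have "\<dots> \<le> r2 * (2 * \<tau>)" using mm_ge d_ge \<tau>p by (simp add: r2_def)
      finally show "setdist (cube 0 \<tau>) \<Lambda> \<le> r2 * (2 * \<tau>)" .
    qed
    also have "\<dots> \<le> ennreal (A * (2 * \<nu> * R) powr \<beta>)"
      using \<tau>R \<tau>0 A beta_pos by (intro ennreal_leI mult_left_mono powr_mono2) auto
    finally show ?thesis .
  qed
  have shellO: "emeasure M (cube 0 t - cube 0 (t/2)) \<le> ennreal (card C * (A * KD * t powr \<beta>))"
    if t: "\<tau> < t" for t
  proof -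
    have tp: "0 < t" using t \<tau>0 by simp
    obtain x0 where x0: "x0 \<in> \<Lambda>" "norm x0 < 4 * d * t" using near[OF t] by auto
    show ?thesis
    proof (rule shell_gen[OF tp])
      show "0 \<le> A * KD * t powr \<beta>" using A KD_nn by simp
      fix c y assume c: "c \<in> C" and y: "y \<in> cube (0 + t *\<^sub>R c) (t / mm)" "y \<in> cube 0 t" "y \<notin> cube 0 (t/2)"
      define e where "e = 0 + t *\<^sub>R c"
      have s: "0 < t / mm" using tp mm_pos by simp
      have en: "norm e \<le> d * t" using cnorm[OF c] tp by (simp add: e_def mult.commute)
      have X: "d * (t / mm) \<le> t / 32" using dtm tp by simp
      have Kn: "0 \<le> d * (t / mm)" using d_ge s by (intro mult_nonneg_nonneg) auto
      have powsplit: "(a * t) powr \<beta> = a powr \<beta> * t powr \<beta>" for a by (rule powr_mult)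
      show "emeasure M (cube (0 + t *\<^sub>R c) (t / mm)) \<le> ennreal (A * KD * t powr \<beta>)"
        unfolding e_def[symmetric]
      proof (cases "d * (t / mm) \<le> setdist (cube e (t / mm)) \<Lambda>")
        case True
        have "emeasure M (cube e (t / mm)) \<le> ennreal (A * (2 * (t / mm)) powr \<beta>)"
        proof (rule inW[OF s])
          show "r1 * (2 * d * (t / mm)) \<le> setdist (cube e (t / mm)) \<Lambda>" using True by (simp add: r1_def)
          have "setdist (cube e (t / mm)) \<Lambda> \<le> dist e x0"
            by (rule setdist_le_dist[OF center_cube x0(1)]) (use s in simp)
          also have "\<dots> \<le> norm e + norm x0" by (simp add: dist_norm norm_triangle_ineq4)
          also have "\<dots> \<le> 5 * d * t" using en x0 by simp
          also have "\<dots> \<le> r2 * (2 * (t / mm))" using mm_pos tp d_ge by (simp add: r2_def field_simps)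
          finally show "setdist (cube e (t / mm)) \<Lambda> \<le> r2 * (2 * (t / mm))" .
        qed
        also have "A * (2 * (t / mm)) powr \<beta> \<le> A * KD * t powr \<beta>"
        proof -
          have "(2 * (t / mm)) powr \<beta> = (2 / mm) powr \<beta> * t powr \<beta>" using powsplit[of "2/mm"] by simp
          also have "\<dots> \<le> KD * t powr \<beta>" using KD_def KI_nn by (intro mult_right_mono) auto
          finally show ?thesis using A by (simp add: mult.assoc mult_left_mono)
        qed
        then have "ennreal (A * (2 * (t / mm)) powr \<beta>) \<le> ennreal (A * KD * t powr \<beta>)" by (rule ennreal_leI)
        finally show "emeasure M (cube e (t / mm)) \<le> ennreal (A * KD * t powr \<beta>)" .
      next
        case False
        then have "setdist (cube e (t / mm)) \<Lambda> < d * (t / mm)" by simp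
        then obtain q x1 where q: "q \<in> cube e (t / mm)" and x1: "x1 \<in> \<Lambda>" and qx: "dist q x1 < d * (t / mm)"
          by (rule setdist_ltE) (use center_cube[of "t/mm" e] s Lne in auto)
        have yn: "t / 2 < norm y" using not_cube_norm[OF y(3)] by simp
        have qy: "norm (y - q) \<le> d * (2 * (t / mm))" using cube_cube_norm[OF y(1)[folded e_def] q] d_def by simp
        have "norm y \<le> norm (y - q) + norm (q - x1) + norm x1"
          using norm_triangle_ineq[of "y - q" "q - x1"] norm_triangle_ineq[of "y - q + (q - x1)" x1] by simp
        moreover have "d * (2 * (t / mm)) = 2 * (d * (t / mm))" by simp
        ultimately have nx1: "t / 4 \<le> norm x1" using yn qy qx X tp unfolding dist_norm by linarith
        define \<rho>' where "\<rho>' = (2 + d) * (t / mm)"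
        have \<rho>'p: "0 < \<rho>'" unfolding \<rho>'_def using s d_ge by (intro mult_pos_pos) auto
        have \<rho>'eq: "\<rho>' = cc * (t / 4)"
        proof -
          have p: "0 < d" "0 < \<nu>" "0 < 2 + d" "16 * d * \<nu> \<noteq> 0" using d_ge nu by auto
          have "mm = (16 * d * \<nu>) * (2 + d)" by (simp add: mm_def)
          then have "\<rho>' = t / (16 * d * \<nu>)" using p by (simp add: \<rho>'_def)
          then show ?thesis using p by (simp add: cc_def)
        qed
        have \<rho>'le: "\<rho>' \<le> cc * norm x1" unfolding \<rho>'eq using nx1 cc_pos by (intro mult_left_mono) auto
        have Dsub: "cube e (t / mm) \<subseteq> cube x1 \<rho>'"
        proof
          fix u assume u: "u \<in> cube e (t / mm)"
          show "u \<in> cube x1 \<rho>'" unfolding mem_cube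
          proof
            fix b :: 'a assume b: "b \<in> Basis"
            have "(u - x1) \<bullet> b = (u - e) \<bullet> b - (q - e) \<bullet> b + (q - x1) \<bullet> b" by (simp add: inner_diff_left)
            moreover have "\<bar>(u - e) \<bullet> b\<bar> \<le> t / mm" "\<bar>(q - e) \<bullet> b\<bar> \<le> t / mm" using u q b by (auto simp: mem_cube)
            moreover have "\<bar>(q - x1) \<bullet> b\<bar> \<le> norm (q - x1)" by (rule Basis_le_norm[OF b])
            moreover have "\<rho>' = 2 * (t / mm) + d * (t / mm)" by (simp add: \<rho>'_def algebra_simps)
            ultimately show "\<bar>(u - x1) \<bullet> b\<bar> \<le> \<rho>'" using qx unfolding dist_norm by linarith
          qed
        qed
        have "emeasure M (cube e (t / mm)) \<le> emeasure M (cube x1 \<rho>')"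
          by (rule emeasure_mono[OF Dsub]) (simp add: setsM)
        also have "\<dots> \<le> ennreal (A * KI * \<rho>' powr \<beta>)" by (rule iso[OF x1 \<rho>'p \<rho>'le])
        also have "A * KI * \<rho>' powr \<beta> \<le> A * KD * t powr \<beta>"
        proof -
          have "\<rho>' powr \<beta> = ((2 + d) / mm) powr \<beta> * t powr \<beta>" using powsplit[of "(2+d)/mm"] by (simp add: \<rho>'_def)
          then have "KI * \<rho>' powr \<beta> = (KI * ((2 + d) / mm) powr \<beta>) * t powr \<beta>" by simp
          also have "\<dots> \<le> KD * t powr \<beta>" using KD_def by (intro mult_right_mono) auto
          finally show ?thesis using A by (simp add: mult.assoc mult_left_mono)
        qed
        then have "ennreal (A * KI * \<rho>' powr \<beta>) \<le> ennreal (A * KD * t powr \<beta>)" by (rule ennreal_leI)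
        finally show "emeasure M (cube e (t / mm)) \<le> ennreal (A * KD * t powr \<beta>)" .
      qed
    qed
  qed
  define S where "S k = (if \<tau> < T / 2^k then cube (0::'a) (T / 2^k) - cube 0 (T / 2^k / 2) else {})" for k :: nat
  have Sm: "S k \<in> sets M" for k unfolding S_def setsM by simp
  have Tp: "0 \<le> T" using R cc_pos by (simp add: T_def)
  have sub1: "cube x R \<subseteq> cube (0::'a) T"
  proof
    fix y :: 'a assume y: "y \<in> cube x R"
    show "y \<in> cube 0 T" unfolding mem_cube
    proof
      fix b :: 'a assume b: "b \<in> Basis"
      have "\<bar>(y - x) \<bullet> b\<bar> \<le> R" using y b by (auto simp: mem_cube)
      moreover have "\<bar>x \<bullet> b\<bar> \<le> norm x" by (rule Basis_le_norm[OF b])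
      moreover have "(y - 0) \<bullet> b = (y - x) \<bullet> b + x \<bullet> b" by (simp add: inner_diff_left)
      ultimately show "\<bar>(y - 0) \<bullet> b\<bar> \<le> T" using nxR unfolding T_def by linarith
    qed
  qed
  have sub2: "cube (0::'a) T \<subseteq> cube 0 \<tau> \<union> (\<Union>k. S k)"
  proof
    fix y :: 'a assume y: "y \<in> cube 0 T"
    show "y \<in> cube 0 \<tau> \<union> (\<Union>k. S k)"
    proof (cases "y \<in> cube 0 \<tau>")
      case False
      then obtain k where "\<tau> < T / 2^k" "y \<in> cube 0 (T / 2^k)" "y \<notin> cube 0 (T / 2^k / 2)"
        using decomp[OF \<tau>0 y] by auto
      then show ?thesis by (auto simp: S_def)
    qed simp
  qed
  have cm: "cube (0::'a) \<tau> \<in> sets M" by (simp add: setsM)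
  have Um: "(\<Union>k. S k) \<in> sets M" using Sm by blast
  have "emeasure M (cube x R) \<le> emeasure M (cube 0 \<tau> \<union> (\<Union>k. S k))"
    by (rule emeasure_mono) (use sub1 sub2 cm Um in blast)+
  also have "\<dots> \<le> emeasure M (cube 0 \<tau>) + emeasure M (\<Union>k. S k)"
    by (rule emeasure_subadditive[OF cm Um])
  also have "\<dots> \<le> ennreal (A * (2 * \<nu> * R) powr \<beta>) + (\<Sum>k. emeasure M (S k))"
    using cen emeasure_subadditive_countably[of S M] Sm by (intro add_mono) auto
  also have "(\<Sum>k. emeasure M (S k)) \<le> (\<Sum>k. ennreal (card C * A * KD * T powr \<beta> * (1 / 2 powr \<beta>)^k))"
  proof (rule suminf_le)
    fix k :: nat
    have "(T / 2^k) powr \<beta> = T powr \<beta> * (1 / 2 powr \<beta>)^k" by (rule pow_div[OF Tp])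
    then show "emeasure M (S k) \<le> ennreal (card C * A * KD * T powr \<beta> * (1 / 2 powr \<beta>)^k)"
      using shellO[of "T / 2^k"] unfolding S_def by (simp add: mult.assoc mult.left_commute)
  qed auto
  also have "\<dots> = ennreal (card C * A * KD * T powr \<beta> / (1 - 1 / 2 powr \<beta>))"
    by (rule geo_sum) (use A beta_pos KD_nn in auto)
  finally have fin: "emeasure M (cube x R) \<le> ennreal (A * (2 * \<nu> * R) powr \<beta>) + 
      ennreal (card C * A * KD * T powr \<beta> / (1 - 1 / 2 powr \<beta>))" by simp
  also have "\<dots> = ennreal (A * (2 * \<nu> * R) powr \<beta> + card C * A * KD * T powr \<beta> / (1 - 1 / 2 powr \<beta>))"
    using A KD_nn q_lt by (intro ennreal_plus[symmetric]) auto
  also have "A * (2 * \<nu> * R) powr \<beta> + card C * A * KD * T powr \<beta> / (1 - 1 / 2 powr \<beta>)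
      = A * ((2*\<nu>) powr \<beta> + card C * KD * (1 + 1/cc) powr \<beta> / (1 - 1 / 2 powr \<beta>)) * R powr \<beta>"
  proof -
    have "T = (1 + 1/cc) * R" by (simp add: T_def algebra_simps)
    then have "T powr \<beta> = (1 + 1/cc) powr \<beta> * R powr \<beta>" by (simp add: powr_mult)
    moreover have "(2 * \<nu> * R) powr \<beta> = (2*\<nu>) powr \<beta> * R powr \<beta>" by (simp add: powr_mult)
    ultimately show ?thesis by (simp add: algebra_simps)
  qed
  finally show ?thesis .
qed

lemma mainF:
  assumes x: "x \<in> \<Lambda>" and R: "0 < R"
  shows "emeasure M (cube x R) \<le> ennreal (KR * A * measure lebesgue (cube x R) powr lam)"
proof -
  have "emeasure M (cube x R) \<le> ennreal (A * KR * R powr \<beta>)"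
  proof (cases "R \<le> cc * norm x")
    case True
    have "emeasure M (cube x R) \<le> ennreal (A * KI * R powr \<beta>)" by (rule iso[OF x R True])
    also have "\<dots> \<le> ennreal (A * KR * R powr \<beta>)"
      using KR_def KD_nn q_lt A by (intro ennreal_leI mult_right_mono mult_left_mono) auto
    finally show ?thesis .
  next
    case False
    then have "emeasure M (cube x R) \<le> ennreal (A * ((2*\<nu>) powr \<beta> + card C * KD * (1 + 1/cc) powr \<beta> / (1 - 1 / 2 powr \<beta>)) * R powr \<beta>)"
      by (intro origin[OF x R]) simp
    also have "\<dots> \<le> ennreal (A * KR * R powr \<beta>)"
      using KR_def KI_nn A by (intro ennreal_leI mult_right_mono mult_left_mono) auto
    finally show ?thesis .
  qed
  also have "\<dots> \<le> ennreal (KR * A * measure lebesgue (cube x R) powr lam)"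
  proof (rule ennreal_leI)
    have "measure lebesgue (cube x R) powr lam = (2 * R) powr \<beta>"
      using measure_cube_powr[OF R] by (simp add: beta_def d_def)
    moreover have "R powr \<beta> \<le> (2 * R) powr \<beta>" using R beta_pos by (intro powr_mono2) auto
    ultimately show "A * KR * R powr \<beta> \<le> KR * A * measure lebesgue (cube x R) powr lam"
      using A KR_nn by (simp add: mult.commute mult.left_commute mult_left_mono)
  qed
  finally show ?thesis .
qed

end


lemma ennroot_mono:
  assumes p: "0 < p" and xy: "x \<le> y"
  shows "ennroot p x \<le> ennroot p y"
proof (cases "y = \<infinity>")
  case True then show ?thesis by (simp add: ennroot_def)
next
  case False
  then have xt: "x \<noteq> \<infinity>" using xy by (metis infinity_ennreal_def neq_top_trans)
  have "enn2real x \<le> enn2real y" using xy False by (intro enn2real_mono) (auto simp: top.not_eq_extremum)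
  then have "enn2real x powr (1/p) \<le> enn2real y powr (1/p)" using p by (intro powr_mono2) auto
  then show ?thesis using False xt by (simp add: ennroot_def ennreal_leI)
qed

lemma ennroot_ennreal: "0 \<le> a \<Longrightarrow> ennroot p (ennreal a) = ennreal (a powr (1/p))"
  by (simp add: ennroot_def)

lemma conv:
  fixes mu :: "'a::euclidean_space set \<Rightarrow> ennreal" and G1 G2 :: "'a set set"
  assumes p: "1 < p" and K: "0 < K"
    and pos1: "\<And>Q. Q \<in> G1 \<Longrightarrow> 0 < measure lebesgue Q"
    and pos2: "\<And>Q. Q \<in> G2 \<Longrightarrow> 0 < measure lebesgue Q"
    and H: "\<And>A Q'. 0 \<le> A \<Longrightarrow> (\<And>Q. Q \<in> G1 \<Longrightarrow> mu Q \<le> ennreal (A * measure lebesgue Q powr lam))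
              \<Longrightarrow> Q' \<in> G2 \<Longrightarrow> mu Q' \<le> ennreal (K * A * measure lebesgue Q' powr lam)"
  shows "(SUP Q\<in>G2. ennroot p (ennreal (1 / measure lebesgue Q powr lam) * mu Q))
         \<le> ennreal (K powr (1/p)) * (SUP Q\<in>G1. ennroot p (ennreal (1 / measure lebesgue Q powr lam) * mu Q))"
    (is "?S2 \<le> _ * ?S1")
proof (cases "?S1 = top")
  case True
  have "ennreal (K powr (1/p)) \<noteq> 0" using K by simp
  then have "ennreal (K powr (1/p)) * ?S1 = top" unfolding True by (simp add: ennreal_mult_top)
  then show ?thesis by (simp only:) simp
next
  case False
  then obtain a where a: "0 \<le> a" "?S1 = ennreal a" by (cases ?S1) auto
  have b1: "mu Q \<le> ennreal (a powr p * measure lebesgue Q powr lam)" if Q: "Q \<in> G1" for Q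
  proof -
    define L where "L = measure lebesgue Q powr lam"
    have L: "0 < L" using pos1[OF Q] by (simp add: L_def)
    have le: "ennroot p (ennreal (1 / L) * mu Q) \<le> ennreal a"
    proof -
      have "ennroot p (ennreal (1 / L) * mu Q) \<le> ?S1" unfolding L_def by (rule SUP_upper[OF Q])
      then show ?thesis using a(2) by simp
    qed
    have mt: "mu Q \<noteq> top"
    proof
      assume "mu Q = top"
      then have "ennreal (1 / L) * mu Q = \<infinity>" using L by (simp add: ennreal_mult_top)
      then have "ennroot p (ennreal (1 / L) * mu Q) = top" by (simp add: ennroot_def)
      with le have "top \<le> ennreal a" by simp
      then show False by (simp add: top_unique)
    qed
    then obtain m where m: "0 \<le> m" "mu Q = ennreal m" by (cases "mu Q") auto
    have "ennreal (1 / L) * mu Q = ennreal (m / L)" using m L by (simp add: ennreal_mult[symmetric])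
    then have "ennreal ((m / L) powr (1/p)) \<le> ennreal a" using le m L by (simp add: ennroot_ennreal)
    then have r: "(m / L) powr (1/p) \<le> a" using a by (simp add: ennreal_le_iff)
    have "m / L = ((m / L) powr (1/p)) powr p" using p m L by (simp add: powr_powr powr_one)
    also have "\<dots> \<le> a powr p" using r p by (intro powr_mono2) auto
    finally have "m \<le> a powr p * L" using L by (simp add: divide_le_eq)
    then show ?thesis using m by (simp add: L_def ennreal_leI)
  qed
  have "?S2 \<le> ennreal (K powr (1/p) * a)"
  proof (rule SUP_least)
    fix Q assume Q: "Q \<in> G2"
    define L where "L = measure lebesgue Q powr lam"
    have L: "0 < L" using pos2[OF Q] by (simp add: L_def)
    have mu: "mu Q \<le> ennreal (K * a powr p * L)" unfolding L_def by (rule H[OF _ b1 Q]) auto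
    have "ennreal (1 / L) * mu Q \<le> ennreal (1 / L) * ennreal (K * a powr p * L)"
      by (rule mult_left_mono[OF mu]) simp
    also have "\<dots> = ennreal (K * a powr p)" using L K by (simp add: ennreal_mult[symmetric])
    finally have "ennroot p (ennreal (1 / L) * mu Q) \<le> ennroot p (ennreal (K * a powr p))"
      using p by (intro ennroot_mono) auto
    also have "\<dots> = ennreal ((K * a powr p) powr (1/p))" using K by (simp add: ennroot_ennreal)
    also have "(K * a powr p) powr (1/p) = K powr (1/p) * a"
      using p a by (simp add: powr_mult powr_powr powr_one)
    finally show "ennroot p (ennreal (1 / measure lebesgue Q powr lam) * mu Q) \<le> ennreal (K powr (1/p) * a)"
      by (simp add: L_def)
  qed
  also have "\<dots> = ennreal (K powr (1/p)) * ?S1" using a by (simp add: ennreal_mult)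
  finally show ?thesis .
qed

lemma WtoF:
  fixes \<Lambda> :: "'a::euclidean_space set" and M :: "'a measure"
  assumes setsM: "sets M = sets lebesgue" and r1: "0 < r1" and r2: "0 \<le> r2" and lam: "0 < lam" and B: "0 \<le> B"
    and hypF: "\<And>x R. x \<in> \<Lambda> \<Longrightarrow> 0 < R \<Longrightarrow> emeasure M (cube x R) \<le> ennreal (B * measure lebesgue (cube x R) powr lam)"
    and Q: "Q \<in> all_cubes" "r1 * diameter Q \<le> setdist Q \<Lambda>" "setdist Q \<Lambda> \<le> r2 * diameter Q"
  shows "emeasure M Q \<le> ennreal ((3 + 2 * real DIM('a) * r2) powr (real DIM('a) * lam) * B * measure lebesgue Q powr lam)"
proof -
  obtain e s where Qe: "Q = cube e s" and s: "0 < s" using Q(1) by (auto simp: all_cubes_def)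
  define n where "n = real DIM('a)"
  have n: "1 \<le> n" by (simp add: n_def)
  have dpos: "0 < diameter Q" using diam_cube(1)[OF s, of e] s Qe by simp
  have "0 < setdist Q \<Lambda>" using Q(2) r1 dpos by (smt (verit) mult_pos_pos)
  then have Lne: "\<Lambda> \<noteq> {}" by auto
  have Qne: "Q \<noteq> {}" using center_cube[of s e] s Qe by auto
  have "setdist Q \<Lambda> \<le> r2 * (n * (2 * s))"
    using Q(3) diam_cube(2)[OF s, of e] r2 Qe n_def by (smt (verit) mult_left_mono)
  then have "setdist Q \<Lambda> < r2 * (n * (2 * s)) + s" using s by simp
  then obtain q x where q: "q \<in> Q" and x: "x \<in> \<Lambda>" and qx: "dist q x < r2 * (n * (2 * s)) + s"
    by (rule setdist_ltE) (use Qne Lne in auto)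
  define \<kappa> where "\<kappa> = 3 + 2 * n * r2"
  have \<kappa>: "1 \<le> \<kappa>" using r2 n by (simp add: \<kappa>_def)
  have ks: "0 < \<kappa> * s" using \<kappa> s by simp
  have sub: "Q \<subseteq> cube x (\<kappa> * s)"
  proof
    fix u assume u: "u \<in> Q"
    show "u \<in> cube x (\<kappa> * s)" unfolding mem_cube
    proof
      fix b :: 'a assume b: "b \<in> Basis"
      have "(u - x) \<bullet> b = (u - e) \<bullet> b - (q - e) \<bullet> b + (q - x) \<bullet> b" by (simp add: inner_diff_left)
      moreover have "\<bar>(u - e) \<bullet> b\<bar> \<le> s" "\<bar>(q - e) \<bullet> b\<bar> \<le> s" using u q b Qe by (auto simp: mem_cube)
      moreover have "\<bar>(q - x) \<bullet> b\<bar> \<le> norm (q - x)" by (rule Basis_le_norm[OF b])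
      moreover have "\<kappa> * s = 2 * s + (r2 * (n * (2 * s)) + s)" by (simp add: \<kappa>_def algebra_simps)
      ultimately show "\<bar>(u - x) \<bullet> b\<bar> \<le> \<kappa> * s" using qx unfolding dist_norm by linarith
    qed
  qed
  have "emeasure M Q \<le> emeasure M (cube x (\<kappa> * s))"
    by (rule emeasure_mono[OF sub]) (simp add: setsM)
  also have "\<dots> \<le> ennreal (B * measure lebesgue (cube x (\<kappa> * s)) powr lam)" by (rule hypF[OF x ks])
  also have "B * measure lebesgue (cube x (\<kappa> * s)) powr lam = \<kappa> powr (n * lam) * B * measure lebesgue Q powr lam"
  proof -
    have "measure lebesgue (cube x (\<kappa> * s)) powr lam = (2 * (\<kappa> * s)) powr (n * lam)"
      using measure_cube_powr[OF ks] n_def by simp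
    also have "\<dots> = \<kappa> powr (n * lam) * (2 * s) powr (n * lam)"
      by (simp add: powr_mult[symmetric] algebra_simps)
    finally show ?thesis using measure_cube_powr[OF s, of e lam] Qe n_def by simp
  qed
  finally show ?thesis unfolding \<kappa>_def n_def .
qed



lemma li_meas:
  fixes w :: "'a::euclidean_space \<Rightarrow> real"
  assumes "locally_integrable w"
  shows "w \<in> borel_measurable lebesgue"
proof (rule borel_measurable_LIMSEQ_real)
  fix i :: nat
  have "set_integrable lebesgue (cball 0 (real i)) w" using assms by (simp add: locally_integrable_def)
  then show "(\<lambda>x. indicator (cball 0 (real i)) x *\<^sub>R w x) \<in> borel_measurable lebesgue"
    unfolding set_integrable_def by (rule borel_measurable_integrable)
next
  fix x :: 'a
  show "(\<lambda>i. indicator (cball 0 (real i)) x *\<^sub>R w x) \<longlonglongrightarrow> w x"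
  proof (rule tendsto_eventually)
    obtain N :: nat where N: "norm x \<le> real N" using real_arch_simple by blast
    show "\<forall>\<^sub>F i in sequentially. indicator (cball 0 (real i)) x *\<^sub>R w x = w x"
      unfolding eventually_sequentially
      by (rule exI[of _ N]) (use N in \<open>auto simp: indicator_def\<close>)
  qed
qed

theorem lemma1p4:
  fixes \<nu> :: real
  assumes "\<nu> > 1"
  shows "\<exists>r1 r2. 0 < r1 \<and> r1 < r2 \<and>
    (\<forall>(\<Lambda> :: 'a::euclidean_space set) (w :: 'a \<Rightarrow> real) (lam :: real) (p :: real).
       countable \<Lambda> \<longrightarrow>
       (\<forall>x\<in>\<Lambda>. \<forall>y\<in>\<Lambda>. x \<noteq> y \<longrightarrow> max (norm x) (norm y) \<le> \<nu> * norm (x - y)) \<longrightarrow>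
       0 < lam \<longrightarrow> lam < 1 \<longrightarrow> p > 1 \<longrightarrow>
       (\<forall>x. w x \<ge> 0) \<longrightarrow> locally_integrable w \<longrightarrow>
       (\<exists>C::real. C \<ge> 1 \<and>
          (\<forall>f :: 'a \<Rightarrow> real. f \<in> borel_measurable lebesgue \<longrightarrow>
             (let F = {cube c r | c r. c \<in> \<Lambda> \<and> r > 0};
                  W = {Q \<in> all_cubes. r1 * diameter Q \<le> setdist Q \<Lambda> \<and>
                                       setdist Q \<Lambda> \<le> r2 * diameter Q}
              in ennreal (1 / C) * morrey_norm p lam W w f \<le> morrey_norm p lam F w f \<and>
                 morrey_norm p lam F w f \<le> ennreal C * morrey_norm p lam W w f))))"
proof -
  define d :: real where "d = real DIM('a)"
  define mm where "mm = 16*d*\<nu>*(2+d)"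
  define cc where "cc = 1/(4*d*\<nu>)"
  define r1 :: real where "r1 = 1/2"
  define r2 where "r2 = 5*d*mm"
  have d1: "1 \<le> d" by (simp add: d_def)
  have mmge: "32 * d \<le> mm"
  proof -
    have "32 * d = 16 * d * 1 * 2" by simp
    also have "\<dots> \<le> 16 * d * \<nu> * (2 + d)" using assms d1 by (intro mult_mono) auto
    finally show ?thesis by (simp add: mm_def)
  qed
  have mmp: "0 < mm" using mmge d1 by linarith
  obtain C :: "'a set" where Cfin: "finite C" and Csub: "C \<subseteq> cube 0 1"
    and Ccov: "\<And>z t y. 0 < t \<Longrightarrow> y \<in> cube z t \<Longrightarrow> \<exists>c\<in>C. y \<in> cube (z + t *\<^sub>R c) (t / mm)"
    using cover_exists[OF mmp] by blast
  have r2ge: "1 \<le> r2"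
  proof -
    have "1 \<le> 5 * d * 32" using d1 by simp
    also have "\<dots> \<le> 5 * d * mm" using mmge d1 by simp
    finally show ?thesis by (simp add: r2_def)
  qed
  show ?thesis
  proof (rule exI[of _ r1], rule exI[of _ r2], intro conjI allI impI)
    show "0 < r1" by (simp add: r1_def)
    show "r1 < r2" using r2ge by (simp add: r1_def)
    fix \<Lambda> :: "'a set" and w :: "'a \<Rightarrow> real" and lam p :: real
    assume ctbl: "countable \<Lambda>"
      and sep: "\<forall>x\<in>\<Lambda>. \<forall>y\<in>\<Lambda>. x \<noteq> y \<longrightarrow> max (norm x) (norm y) \<le> \<nu> * norm (x - y)"
      and lam0: "0 < lam" and lam1: "lam < 1" and p1: "1 < p" and wnn: "\<forall>x. 0 \<le> w x"
      and wli: "locally_integrable w"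
    define \<beta> where "\<beta> = d * lam"
    define KI where "KI = card C * (2/mm) powr \<beta> / (1 - 1 / 2 powr \<beta>)"
    define KD where "KD = (2/mm) powr \<beta> + KI * ((2+d)/mm) powr \<beta>"
    define KR where "KR = KI + (2*\<nu>) powr \<beta> + card C * KD * (1 + 1/cc) powr \<beta> / (1 - 1 / 2 powr \<beta>)"
    define KA where "KA = (3 + 2 * real DIM('a) * r2) powr (real DIM('a) * lam)"
    define Cst where "Cst = max 1 (max (KR powr (1/p)) (KA powr (1/p)))"
    have bp: "0 < \<beta>" using d1 lam0 by (simp add: \<beta>_def)
    have qlt: "1 / 2 powr \<beta> < 1" using bp by simp
    have KInn: "0 \<le> KI" using qlt by (simp add: KI_def)
    have KDnn: "0 \<le> KD" using KInn by (simp add: KD_def)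
    have KRpos: "0 < KR"
    proof -
      have a: "0 < (2*\<nu>) powr \<beta>" using assms by simp
      have b: "0 \<le> card C * KD * (1 + 1/cc) powr \<beta> / (1 - 1 / 2 powr \<beta>)" using KDnn qlt by simp
      show ?thesis unfolding KR_def using a b KInn by linarith
    qed
    have KApos: "0 < KA"
    proof -
      have "0 \<le> 2 * real DIM('a) * r2" using r2ge by simp
      then have "0 < 3 + 2 * real DIM('a) * r2" by linarith
      then show ?thesis by (simp add: KA_def)
    qed
    have wm: "w \<in> borel_measurable lebesgue" by (rule li_meas[OF wli])
    show "\<exists>C\<ge>1. \<forall>f. f \<in> borel_measurable lebesgue \<longrightarrow>
             (let F = {cube c r | c r. c \<in> \<Lambda> \<and> r > 0};
                  W = {Q \<in> all_cubes. r1 * diameter Q \<le> setdist Q \<Lambda> \<and> setdist Q \<Lambda> \<le> r2 * diameter Q}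
              in ennreal (1 / C) * morrey_norm p lam W w f \<le> morrey_norm p lam F w f \<and>
                 morrey_norm p lam F w f \<le> ennreal C * morrey_norm p lam W w f)"
    proof (rule exI[of _ Cst], intro conjI allI impI)
      show "1 \<le> Cst" by (simp add: Cst_def)
      fix f :: "'a \<Rightarrow> real" assume fm: "f \<in> borel_measurable lebesgue"
      define G where "G = (\<lambda>x. ennreal (\<bar>f x\<bar> powr p * w x))"
      have Gm: "G \<in> borel_measurable lebesgue" unfolding G_def using fm wm by measurable
      define M where "M = density lebesgue G"
      have setsM: "sets M = sets lebesgue" by (simp add: M_def)
      have single: "emeasure M {x} = 0" for x
      proof -
        have "{x} \<in> null_sets lebesgue" by simp
        then show ?thesis unfolding M_def
          by (simp add: emeasure_density[OF Gm] nn_integral_null_set)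
      qed
      define mu where "mu Q = (\<integral>\<^sup>+ x\<in>Q. ennreal (\<bar>f x\<bar> powr p * w x) \<partial>lebesgue)" for Q
      have mu_eq: "mu Q = emeasure M Q" if "Q \<in> sets lebesgue" for Q
        unfolding mu_def M_def emeasure_density[OF Gm that] by (simp add: G_def)
      define F where "F = {cube c r | c r. c \<in> \<Lambda> \<and> r > 0}"
      define W where "W = {Q \<in> all_cubes. r1 * diameter Q \<le> setdist Q \<Lambda> \<and> setdist Q \<Lambda> \<le> r2 * diameter Q}"
      have mn: "morrey_norm p lam G' w f = (SUP Q\<in>G'. ennroot p (ennreal (1 / measure lebesgue Q powr lam) * mu Q))" for G'
        by (simp add: morrey_norm_def mu_def)
      have posF: "0 < measure lebesgue Q" if "Q \<in> F" for Q
        using that measure_cube_pos by (auto simp: F_def)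
      have posW: "0 < measure lebesgue Q" if "Q \<in> W" for Q
        using that measure_cube_pos by (auto simp: W_def all_cubes_def)
      have mnF: "morrey_norm p lam F w f \<le> ennreal (KR powr (1/p)) * morrey_norm p lam W w f"
        unfolding mn
      proof (rule conv[OF p1 KRpos posW posF])
        fix A Q' assume A: "0 \<le> A" and hA: "\<And>Q. Q \<in> W \<Longrightarrow> mu Q \<le> ennreal (A * measure lebesgue Q powr lam)"
          and Q': "Q' \<in> F"
        interpret g: geo \<Lambda> \<nu> lam A M C d mm cc r1 r2 \<beta> KI KD KR
        proof
          show "\<And>Q. Q \<in> all_cubes \<Longrightarrow> r1 * diameter Q \<le> setdist Q \<Lambda> \<Longrightarrow> setdist Q \<Lambda> \<le> r2 * diameter Q
               \<Longrightarrow> emeasure M Q \<le> ennreal (A * measure lebesgue Q powr lam)"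
          proof -
            fix Q assume "Q \<in> all_cubes" "r1 * diameter Q \<le> setdist Q \<Lambda>" "setdist Q \<Lambda> \<le> r2 * diameter Q"
            then have QW: "Q \<in> W" by (simp add: W_def)
            then have "Q \<in> sets lebesgue" by (auto simp: W_def all_cubes_def)
            then show "emeasure M Q \<le> ennreal (A * measure lebesgue Q powr lam)"
              using hA[OF QW] mu_eq by simp
          qed
        qed (use assms sep setsM single lam0 A Cfin Csub Ccov in
             \<open>auto simp: d_def mm_def cc_def r1_def r2_def \<beta>_def KI_def KD_def KR_def\<close>)
        obtain c r where Qc: "Q' = cube c r" "c \<in> \<Lambda>" "0 < r" using Q' by (auto simp: F_def)
        show "mu Q' \<le> ennreal (KR * A * measure lebesgue Q' powr lam)"
          using g.mainF[OF Qc(2,3)] mu_eq[of Q'] Qc(1) by simp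
      qed
      have mnW: "morrey_norm p lam W w f \<le> ennreal (KA powr (1/p)) * morrey_norm p lam F w f"
        unfolding mn
      proof (rule conv[OF p1 KApos posF posW])
        fix B Q' assume B: "0 \<le> B" and hB: "\<And>Q. Q \<in> F \<Longrightarrow> mu Q \<le> ennreal (B * measure lebesgue Q powr lam)"
          and Q': "Q' \<in> W"
        have hF: "emeasure M (cube x R) \<le> ennreal (B * measure lebesgue (cube x R) powr lam)"
          if "x \<in> \<Lambda>" "0 < R" for x R
        proof -
          have "cube x R \<in> F" using that by (auto simp: F_def)
          then have "mu (cube x R) \<le> ennreal (B * measure lebesgue (cube x R) powr lam)" by (rule hB)
          then show ?thesis using mu_eq[OF cube_sets] by simp
        qed
        have Q'm: "Q' \<in> sets lebesgue" using Q' by (auto simp: W_def all_cubes_def)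
        have "emeasure M Q' \<le> ennreal (KA * B * measure lebesgue Q' powr lam)"
          unfolding KA_def
          by (rule WtoF[OF setsM _ _ lam0 B hF, of r1 r2]) (use Q' r2ge in \<open>auto simp: W_def r1_def\<close>)
        then show "mu Q' \<le> ennreal (KA * B * measure lebesgue Q' powr lam)" using mu_eq[OF Q'm] by simp
      qed
      have c1: "KR powr (1/p) \<le> Cst" "KA powr (1/p) \<le> Cst" by (auto simp: Cst_def)
      have Cp: "0 < Cst" by (simp add: Cst_def)
      have fin1: "morrey_norm p lam F w f \<le> ennreal Cst * morrey_norm p lam W w f"
        using mnF c1(1) by (meson ennreal_leI mult_right_mono order_trans zero_le)
      have "ennreal (1 / Cst) * morrey_norm p lam W w f
            \<le> ennreal (1 / Cst) * (ennreal (KA powr (1/p)) * morrey_norm p lam F w f)"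
        by (rule mult_left_mono[OF mnW]) simp
      also have "\<dots> = ennreal (KA powr (1/p) / Cst) * morrey_norm p lam F w f"
        using Cp by (simp add: ennreal_mult[symmetric] mult.assoc[symmetric])
      also have "\<dots> \<le> 1 * morrey_norm p lam F w f"
        using c1(2) Cp by (intro mult_right_mono) (auto simp: divide_le_eq)
      finally have fin2: "ennreal (1 / Cst) * morrey_norm p lam W w f \<le> morrey_norm p lam F w f" by simp
      show "let F = {cube c r | c r. c \<in> \<Lambda> \<and> r > 0};
                  W = {Q \<in> all_cubes. r1 * diameter Q \<le> setdist Q \<Lambda> \<and> setdist Q \<Lambda> \<le> r2 * diameter Q}
              in ennreal (1 / Cst) * morrey_norm p lam W w f \<le> morrey_norm p lam F w f \<and>
                 morrey_norm p lam F w f \<le> ennreal Cst * morrey_norm p lam W w f"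
        unfolding Let_def F_def[symmetric] W_def[symmetric] using fin1 fin2 by blast
    qed
  qed
qed


end
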